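(* Let $n\ge1$ and $S\subseteq[n-1]$. Then \[\#\{\pi\in\mathrm{Av}_n(132)\mid \mathrm{Des}(\pi)=S\}=\#\{\mathcal D\text{ Dyck path of semilength } n\mid \delta(\mathcal D)=\alpha(S)\}.\]
   Context: $\mathrm{Av}_n(132)$ is the set of permutations of $[n]=\{1,\dots,n\}$ with no subsequence order-isomorphic to $132$. $\mathrm{Des}(\pi)=\{i\in[n-1]:\pi(i)>\pi(i+1)\}$. For $S=\{s_1<\dots<s_m\}\subseteq[n-1]$, $\alpha(S)$ is the composition $(s_1,s_2-s_1,\dots,s_m-s_{m-1},n-s_m)$ of $n$. A Dyck path of semilength $n$ is a word in $U,D$ with $n$ letters of each kind such that every prefix has at least as many $U$'s as $D$'s. Writing such a path uniquely as $U^{\alpha_1}D^{\delta_1}U^{\alpha_2}D^{\delta_2}\cdots U^{\alpha_k}D^{\delta_k}$ with all exponents positive, its ascent composition is $(\alpha_1,\dots,\alpha_k)$ and its descent composition is $\delta(\mathcal D)=(\delta_1,\dots,\delta_k)$. *)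

theory Defs
  imports Main
begin

(* Permutations of [n] are represented as lists: p ! (i-1) = pi(i). *)
definition is_perm :: "nat \<Rightarrow> nat list \<Rightarrow> bool" where
  "is_perm n p \<longleftrightarrow> distinct p \<and> set p = {1..n}"

definition contains_132 :: "nat list \<Rightarrow> bool" where
  "contains_132 p \<longleftrightarrow> (\<exists>i j k. i < j \<and> j < k \<and> k < length p \<and>
       p ! i < p ! k \<and> p ! k < p ! j)"

definition Av132 :: "nat \<Rightarrow> nat list set" where
  "Av132 n = {p. is_perm n p \<and> \<not> contains_132 p}"

definition Des :: "nat list \<Rightarrow> nat set" where
  "Des p = {i. 1 \<le> i \<and> i < length p \<and> p ! (i - 1) > p ! i}"

(* alpha(S) = (s1, s2-s1, ..., n - sm) for S subseteq [n-1] *)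
definition alpha :: "nat \<Rightarrow> nat set \<Rightarrow> nat list" where
  "alpha n S = (let s = sorted_list_of_set S @ [n] in
                 map (\<lambda>i. s ! i - (if i = 0 then 0 else s ! (i - 1))) [0..<length s])"

(* Dyck paths: True = U, False = D *)
definition is_dyck :: "nat \<Rightarrow> bool list \<Rightarrow> bool" where
  "is_dyck n w \<longleftrightarrow> length w = 2 * n \<and> count_list w True = n \<and>
     (\<forall>k \<le> length w. count_list (take k w) False \<le> count_list (take k w) True)"

fun runs :: "bool \<Rightarrow> bool list \<Rightarrow> nat list" where
  "runs b [] = []"
| "runs b (x # xs) =
     (if x = b then
        (case runs b xs of
           [] \<Rightarrow> [1]
         | (r # rs) \<Rightarrow> (if xs \<noteq> [] \<and> hd xs = b then Suc r # rs else 1 # r # rs))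
      else runs b xs)"

definition delta :: "bool list \<Rightarrow> nat list" where
  "delta w = runs False w"

end

theory Submission
  imports Defs
begin


definition inc_first :: "nat list \<Rightarrow> nat list" where
  "inc_first l = (case l of [] \<Rightarrow> [1] | r # rs \<Rightarrow> Suc r # rs)"
definition inc_last :: "nat list \<Rightarrow> nat list" where
  "inc_last l = (if l = [] then [1] else butlast l @ [Suc (last l)])"

fun asc :: "nat list \<Rightarrow> nat list" where
  "asc [] = []"
| "asc (x # xs) = (case xs of [] \<Rightarrow> [1] | y # _ \<Rightarrow> if x > y then 1 # asc xs else inc_first (asc xs))"

lemma inc_first_ne[simp]: "inc_first l \<noteq> []"
  by (auto simp: inc_first_def split: list.splits)

lemma asc_nonempty: "xs \<noteq> [] \<Longrightarrow> asc xs \<noteq> []"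
  by (cases xs; cases "tl xs") auto

lemma inc_first_app: "l \<noteq> [] \<Longrightarrow> inc_first (l @ m) = inc_first l @ m"
  by (cases l) (auto simp: inc_first_def)

lemma inc_last_cons: "l \<noteq> [] \<Longrightarrow> inc_last (a # l) = a # inc_last l"
  by (auto simp: inc_last_def)

lemma inc_last_first: "l \<noteq> [] \<Longrightarrow> inc_last (inc_first l) = inc_first (inc_last l)"
  by (cases l; cases "tl l") (auto simp: inc_last_def inc_first_def)

lemma asc_snoc: "(\<forall>x\<in>set xs. x < v) \<Longrightarrow> asc (xs @ [v]) = inc_last (asc xs)"
proof (induction xs)
  case Nil then show ?case by (simp add: inc_last_def)
next
  case (Cons x xs)
  show ?case
  proof (cases xs)
    case Nil then show ?thesis using Cons by (simp add: inc_last_def inc_first_def)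
  next
    case (Cons y ys)
    have ne: "asc xs \<noteq> []" by (rule asc_nonempty) (simp add: Cons)
    have "asc (x # xs @ [v]) = (if x > y then 1 # asc (xs @ [v]) else inc_first (asc (xs @ [v])))"
      using Cons by simp
    also have "\<dots> = (if x > y then 1 # inc_last (asc xs) else inc_first (inc_last (asc xs)))"
      using Cons.IH Cons.prems by simp
    also have "\<dots> = inc_last (asc (x # xs))"
      using Cons ne by (simp add: inc_last_cons inc_last_first)
    finally show ?thesis by simp
  qed
qed

lemma asc_app: "ys = [] \<or> hd ys < v \<Longrightarrow> asc (xs @ v # ys) = asc (xs @ [v]) @ asc ys"
proof (induction xs)
  case Nil then show ?case by (cases ys) auto
next
  case (Cons x xs)
  have h: "hd (xs @ v # ys) = hd (xs @ [v])" by (cases xs) auto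
  obtain z zs where z: "xs @ v # ys = z # zs" by (cases "xs @ v # ys") auto
  obtain z' zs' where z': "xs @ [v] = z' # zs'" by (cases "xs @ [v]") auto
  have zz: "z = z'" using h z z' by simp
  have ne: "asc (xs @ [v]) \<noteq> []" using asc_nonempty by simp
  show ?case using Cons z z' zz ne by (simp add: inc_first_app)
qed

lemma asc_comb: "(\<forall>x\<in>set xs. x < v) \<Longrightarrow> (\<forall>y\<in>set ys. y < v) \<Longrightarrow>
   asc (xs @ v # ys) = inc_last (asc xs) @ asc ys"
  using asc_app[of ys v xs] asc_snoc[of xs v] by (cases ys) auto

lemma asc_shift: "asc (map (\<lambda>x. x + c) xs) = asc xs"
  by (induction xs) (auto split: list.splits)

lemma runs_F_T: "runs False (True # xs) = runs False xs" by simp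

lemma runs_F_F: "runs False (False # xs) =
  (if xs \<noteq> [] \<and> hd xs = False then inc_first (runs False xs) else 1 # runs False xs)"
  by (auto simp: inc_first_def split: list.splits)

lemma runs_ne: "False \<in> set xs \<Longrightarrow> runs False xs \<noteq> []"
  by (induction xs) (auto split: list.splits)

lemma runs_ne': "xs \<noteq> [] \<Longrightarrow> last xs = False \<Longrightarrow> runs False xs \<noteq> []"
  using runs_ne last_in_set by metis

declare runs.simps[simp del]

lemma runs_snoc: "xs = [] \<or> last xs = False \<Longrightarrow> runs False (xs @ [False]) = inc_last (runs False xs)"
proof (induction xs)
  case Nil then show ?case by (simp add: runs.simps inc_last_def)
next
  case (Cons x xs)
  show ?case
  proof (cases "xs = []")
    case True then show ?thesis using Cons by (simp add: runs.simps inc_last_def inc_first_def)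
  next
    case False
    have lx: "last xs = False" using Cons.prems False by simp
    have ne: "runs False xs \<noteq> []" using runs_ne'[of xs] lx False by simp
    have h: "hd (xs @ [False]) = hd xs" using False by simp
    show ?thesis
    proof (cases x)
      case True then show ?thesis using Cons.IH lx by (simp add: runs_F_T)
    next
      case x: False
      show ?thesis using Cons.IH lx ne h False x
        by (simp add: runs_F_F inc_last_cons inc_last_first)
    qed
  qed
qed

lemma runs_app: "ys = [] \<or> hd ys = True \<Longrightarrow> runs False (xs @ False # ys) = runs False (xs @ [False]) @ runs False ys"
proof (induction xs)
  case Nil then show ?case by (cases ys) (auto simp: runs_F_F runs_F_T runs.simps(1))
next
  case (Cons x xs)
  have h: "hd (xs @ False # ys) = hd (xs @ [False])" by (cases xs) auto
  have ne: "runs False (xs @ [False]) \<noteq> []" using runs_ne by simp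
  show ?case
  proof (cases x)
    case True then show ?thesis using Cons by (simp add: runs_F_T)
  next
    case False then show ?thesis using Cons h ne by (simp add: runs_F_F inc_first_app)
  qed
qed

lemma delta_comb: "a = [] \<or> last a = False \<Longrightarrow> b = [] \<or> hd b = True \<Longrightarrow>
  delta (True # a @ False # b) = inc_last (delta a) @ delta b"
  unfolding delta_def using runs_app[of b a] runs_snoc[of a] by (simp add: runs_F_T)



fun Dd :: "nat \<Rightarrow> nat list \<Rightarrow> nat list" where
  "Dd a [] = []"
| "Dd a (x # xs) = (x - a) # Dd x xs"

lemma Dd_length[simp]: "length (Dd a s) = length s"
  by (induction s arbitrary: a) auto

lemma Dd_nth: "i < length s \<Longrightarrow> Dd a s ! i = s ! i - (if i = 0 then a else s ! (i - 1))"
proof (induction s arbitrary: a i)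
  case Nil then show ?case by simp
next
  case (Cons x xs) then show ?case by (cases i) (auto simp: nth_Cons')
qed

lemma Dd_map: "Dd a s = map (\<lambda>i. s ! i - (if i = 0 then a else s ! (i - 1))) [0..<length s]"
  by (rule nth_equalityI) (simp_all add: Dd_nth del: upt_Suc)

lemma alpha_Dd: "alpha n S = Dd 0 (sorted_list_of_set S @ [n])"
  unfolding alpha_def Let_def by (simp only: Dd_map)

lemma Dd_Suc: "Dd (Suc a) (map Suc xs) = Dd a xs"
  by (induction xs arbitrary: a) auto

lemma Dd_Suc0: "xs \<noteq> [] \<Longrightarrow> Dd 0 (map Suc xs) = inc_first (Dd 0 xs)"
  by (cases xs) (auto simp: Dd_Suc inc_first_def)

lemma Dd_inj: "sorted xs \<Longrightarrow> sorted ys \<Longrightarrow> \<forall>x\<in>set xs. a \<le> x \<Longrightarrow> \<forall>y\<in>set ys. a \<le> y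
  \<Longrightarrow> Dd a xs = Dd a ys \<Longrightarrow> xs = ys"
proof (induction xs arbitrary: a ys)
  case Nil then show ?case by (cases ys) auto
next
  case (Cons x xs)
  then show ?case
  proof (cases ys)
    case Nil then show ?thesis using Cons by simp
  next
    fix y ys' assume Cons2: "ys = y # ys'"
    have "x = y" using Cons.prems Cons2 by auto
    moreover have "xs = ys'" using Cons.prems Cons2 \<open>x = y\<close> by (intro Cons.IH[where a=x]) auto
    ultimately show ?thesis using Cons2 by simp
  qed
qed

lemma alpha_inj: assumes "S \<subseteq> {1..n-1}" "T \<subseteq> {1..n-1}" "n \<ge> 1" "alpha n S = alpha n T"
  shows "S = T"
proof -
  have fS: "finite S" "finite T" using assms finite_subset by auto
  have le: "\<forall>x\<in>S. x \<le> n" "\<forall>x\<in>T. x \<le> n" using assms(1,2) by fastforce+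
  have "sorted_list_of_set S @ [n] = sorted_list_of_set T @ [n]"
    apply (rule Dd_inj[of _ _ 0])
    using assms fS le by (auto simp: alpha_Dd sorted_append)
  then have "sorted_list_of_set S = sorted_list_of_set T" by simp
  then show ?thesis using fS by (metis set_sorted_list_of_set)
qed

lemma sl_char: "sorted_wrt (<) l \<Longrightarrow> sorted_list_of_set (set l) = l"
  by (metis finite_set sorted_list_of_set(1) strict_sorted_equal strict_sorted_list_of_set)

lemma sl_Suc: "finite T \<Longrightarrow> sorted_list_of_set (Suc ` T) = map Suc (sorted_list_of_set T)"
proof -
  assume f: "finite T"
  have "sorted_wrt (<) (map Suc (sorted_list_of_set T))"
    by (simp add: sorted_wrt_map strict_sorted_list_of_set)
  then have "sorted_list_of_set (set (map Suc (sorted_list_of_set T))) = map Suc (sorted_list_of_set T)"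
    by (rule sl_char)
  then show ?thesis using f by simp
qed

lemma sl_ins1: "finite T \<Longrightarrow> 0 \<notin> T \<Longrightarrow> sorted_list_of_set (insert 1 (Suc ` T)) = 1 # map Suc (sorted_list_of_set T)"
proof -
  assume f: "finite T" and z: "0 \<notin> T"
  have "sorted_wrt (<) (1 # map Suc (sorted_list_of_set T))"
    using f z by (auto simp: sorted_wrt_map strict_sorted_list_of_set) (metis Suc_lessI not_gr0)
  then have "sorted_list_of_set (set (1 # map Suc (sorted_list_of_set T))) = 1 # map Suc (sorted_list_of_set T)"
    by (rule sl_char)
  then show ?thesis using f by simp
qed

lemma Des_sub: "Des p \<subseteq> {1..length p - 1}"
  unfolding Des_def by auto

lemma Des_Cons: "Des (x # y # r) = (if x > y then insert 1 (Suc ` Des (y # r)) else Suc ` Des (y # r))"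
proof -
  have "i \<in> Des (x # y # r) \<longleftrightarrow> i \<in> (if x > y then insert 1 (Suc ` Des (y # r)) else Suc ` Des (y # r))" for i
  proof (cases i)
    case 0 then show ?thesis by (auto simp: Des_def)
  next
    case (Suc j)
    then show ?thesis
      by (cases j) (auto simp: Des_def image_iff)
  qed
  then show ?thesis by blast
qed

lemma asc_alpha: "p \<noteq> [] \<Longrightarrow> asc p = alpha (length p) (Des p)"
proof (induction p)
  case Nil then show ?case by simp
next
  case (Cons x q)
  show ?case
  proof (cases q)
    case Nil
    have "Des [x] = {}" by (auto simp: Des_def)
    then show ?thesis using Nil by (simp add: alpha_Dd)
  next
    case (Cons y r)
    have IH: "asc q = Dd 0 (sorted_list_of_set (Des q) @ [length q])"
      using Cons.IH Cons by (simp add: alpha_Dd)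
    have f: "finite (Des q)" "0 \<notin> Des q" by (auto simp: Des_def)
    show ?thesis
    proof (cases "x > y")
      case True
      have D: "Des (x # q) = insert 1 (Suc ` Des q)" using True Cons by (simp add: Des_Cons)
      have "alpha (length (x # q)) (Des (x # q)) = Dd 0 ((1 # map Suc (sorted_list_of_set (Des q))) @ [Suc (length q)])"
        unfolding alpha_Dd D sl_ins1[OF f] by simp
      also have "\<dots> = 1 # Dd 0 (sorted_list_of_set (Des q) @ [length q])"
        using Dd_Suc[of 0 "sorted_list_of_set (Des q) @ [length q]"] by simp
      finally show ?thesis using True Cons IH by simp
    next
      case False
      have "alpha (length (x # q)) (Des (x # q)) = Dd 0 (map Suc (sorted_list_of_set (Des q) @ [length q]))"
        using False f Cons by (simp add: alpha_Dd Des_Cons sl_Suc del: Dd.simps)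
      also have "\<dots> = inc_first (Dd 0 (sorted_list_of_set (Des q) @ [length q]))"
        by (rule Dd_Suc0) simp
      finally show ?thesis using False Cons IH by simp
    qed
  qed
qed



lemma cnt_sum: "count_list xs True + count_list xs False = length xs"
  by (induction xs) auto

lemma dyck0: "is_dyck 0 w \<longleftrightarrow> w = []"
  by (auto simp: is_dyck_def)

lemma dyck_cnt: "is_dyck k a \<Longrightarrow> count_list a True = k \<and> count_list a False = k \<and> length a = 2 * k"
  using cnt_sum[of a] by (auto simp: is_dyck_def)

lemma dyck_pref: "is_dyck k a \<Longrightarrow> j \<le> length a \<Longrightarrow> count_list (take j a) False \<le> count_list (take j a) True"
  by (auto simp: is_dyck_def)

lemma combD_dyck: assumes a: "is_dyck k a" and b: "is_dyck m b"
  shows "is_dyck (k + 1 + m) (True # a @ False # b)"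
proof -
  have ca: "count_list a True = k" "count_list a False = k" "length a = 2 * k" using dyck_cnt[OF a] by auto
  have cb: "count_list b True = m" "count_list b False = m" "length b = 2 * m" using dyck_cnt[OF b] by auto
  have pref: "count_list (take j (True # a @ False # b)) False \<le> count_list (take j (True # a @ False # b)) True"
    if j: "j \<le> length (True # a @ False # b)" for j
  proof (cases j)
    case 0 then show ?thesis by simp
  next
    case (Suc i)
    show ?thesis
    proof (cases "i \<le> length a")
      case True
      then have "take j (True # a @ False # b) = True # take i a" using Suc by simp
      then show ?thesis using dyck_pref[OF a True] by simp
    next
      case False
      then obtain t where t: "i = length a + Suc t" by (metis add_Suc_right less_imp_Suc_add not_le_imp_less)
      then have "take j (True # a @ False # b) = True # a @ False # take t b" using Suc by simp
      moreover have "t \<le> length b" using j t Suc by simp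
      ultimately show ?thesis using dyck_pref[OF b, of t] ca by simp
    qed
  qed
  show ?thesis unfolding is_dyck_def using ca cb pref by simp
qed

lemma dyck_last: assumes a: "is_dyck k a" and k: "k > 0" shows "last a = False"
proof (rule ccontr)
  assume l: "last a \<noteq> False"
  have ca: "count_list a True = k" "count_list a False = k" "length a = 2 * k" using dyck_cnt[OF a] by auto
  have ne: "a \<noteq> []" using ca k by auto
  have e: "a = butlast a @ [True]" using l ne append_butlast_last_id by force
  have "butlast a = take (length a - 1) a" by (simp add: butlast_conv_take)
  then have "count_list (butlast a) False \<le> count_list (butlast a) True" using dyck_pref[OF a, of "length a - 1"] by simp
  moreover have "count_list a True = count_list (butlast a) True + 1" "count_list a False = count_list (butlast a) False"
    using arg_cong[OF e, of "\<lambda>l. count_list l True"] arg_cong[OF e, of "\<lambda>l. count_list l False"] by simp_all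
  ultimately show False using ca by simp
qed

lemma dyck_hd: assumes b: "is_dyck m b" and m: "m > 0" shows "hd b = True"
proof (rule ccontr)
  assume h: "hd b \<noteq> True"
  have ne: "b \<noteq> []" using dyck_cnt[OF b] m by auto
  then obtain r where "b = False # r" using h by (cases b) auto
  then show False using dyck_pref[OF b, of 1] by simp
qed

lemma dyck_no_ext: assumes a: "is_dyck k a" and a2: "is_dyck k' (a @ False # r)" shows False
proof -
  have "take (Suc (length a)) (a @ False # r) = a @ [False]" by simp
  then show False using dyck_pref[OF a2, of "Suc (length a)"] dyck_cnt[OF a] by simp
qed

lemma combD_inj: assumes "is_dyck k a" "is_dyck k' a'" "True # a @ False # b = True # a' @ False # b'"
  shows "a = a' \<and> b = b'"
proof -
  have e: "a @ False # b = a' @ False # b'" using assms(3) by simp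
  then obtain us where "(a = a' @ us \<and> us @ False # b = False # b') \<or> (a @ us = a' \<and> False # b = us @ False # b')"
    by (auto simp: append_eq_append_conv2)
  then show ?thesis
  proof
    assume h: "a = a' @ us \<and> us @ False # b = False # b'"
    show ?thesis
    proof (cases us)
      case Nil then show ?thesis using h by simp
    next
      case (Cons u us')
      then have "u = False" "a = a' @ False # us'" using h by auto
      then show ?thesis using dyck_no_ext assms by blast
    qed
  next
    assume h: "a @ us = a' \<and> False # b = us @ False # b'"
    show ?thesis
    proof (cases us)
      case Nil then show ?thesis using h by simp
    next
      case (Cons u us')
      then have "u = False" "a' = a @ False # us'" using h by auto
      then show ?thesis using dyck_no_ext assms by blast
    qed
  qed
qed



lemma dyck_split: assumes w: "is_dyck n w" and n: "n \<ge> 1"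
  shows "\<exists>k a b. k < n \<and> is_dyck k a \<and> is_dyck (n - 1 - k) b \<and> w = True # a @ False # b"
proof -
  define P where "P j \<longleftrightarrow> 0 < j \<and> count_list (take j w) False = count_list (take j w) True" for j
  have cw: "count_list w True = n" "count_list w False = n" "length w = 2 * n" using dyck_cnt[OF w] by auto
  have P2n: "P (2 * n)" unfolding P_def using cw n by simp
  define j where "j = (LEAST j. P j)"
  have Pj: "P j" unfolding j_def by (rule LeastI[of P, OF P2n])
  have jle: "j \<le> 2 * n" unfolding j_def by (rule Least_le[of P, OF P2n])
  have less: "count_list (take i w) False < count_list (take i w) True" if "0 < i" "i < j" for i
  proof -
    have "\<not> P i" using not_less_Least[of i P] that unfolding j_def by blast
    moreover have "count_list (take i w) False \<le> count_list (take i w) True"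
      using dyck_pref[OF w, of i] that jle cw by simp
    ultimately show ?thesis using that unfolding P_def by simp
  qed
  have "w \<noteq> []" using cw n by auto
  then obtain x w' where xw: "w = x # w'" by (cases w) auto
  have x: "x = True"
    using dyck_pref[OF w, of 1] xw by (cases x) auto
  have j2: "j \<ge> 2"
  proof (rule ccontr)
    assume "\<not> j \<ge> 2"
    then have "j = 1" using Pj unfolding P_def by simp
    then show False using Pj xw x unfolding P_def by simp
  qed
  define i where "i = j - 2"
  have il: "i < length w'" using jle cw xw j2 i_def by simp
  have jS: "j = Suc (Suc i)" using j2 i_def by simp
  have tj: "take j w = True # take i w' @ [w' ! i]"
    using xw x il jS by (simp add: take_Suc_conv_app_nth)
  have tj1: "take (j - 1) w = True # take i w'"
    using xw x jS by simp
  have wi: "w' ! i = False"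
  proof (rule ccontr)
    assume "w' ! i \<noteq> False"
    then have "w' ! i = True" by simp
    then have "count_list (take i w') False = count_list (take i w') True + 2"
      using Pj tj unfolding P_def by simp
    moreover have "count_list (take (j - 1) w) False \<le> count_list (take (j - 1) w) True"
      using dyck_pref[OF w, of "j - 1"] jle cw by simp
    ultimately show False using tj1 by simp
  qed
  define a where "a = take i w'"
  define b where "b = drop (Suc i) w'"
  have wab: "w = True # a @ False # b"
    unfolding a_def b_def using xw x wi il id_take_nth_drop[OF il] by simp
  have la: "length a = i" unfolding a_def using il by simp
  have tj': "take j w = True # a @ [False]" using tj wi a_def by simp
  have caeq: "count_list a False = count_list a True" using Pj tj' unfolding P_def by simp
  define k where "k = count_list a True"
  have lak: "length a = 2 * k" using cnt_sum[of a] caeq k_def by simp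
  have da: "is_dyck k a" unfolding is_dyck_def
  proof (intro conjI allI impI)
    show "length a = 2 * k" by fact
    show "count_list a True = k" by (simp add: k_def)
    fix l assume l: "l \<le> length a"
    have "take (Suc l) w = True # take l a" using wab l by simp
    moreover have "Suc l < j" using l la i_def j2 by simp
    ultimately show "count_list (take l a) False \<le> count_list (take l a) True"
      using less[of "Suc l"] by simp
  qed
  have lw: "length w = length a + 2 + length b" using wab by simp
  have kn: "k < n" using lw cw lak by simp
  have cb: "count_list b True = n - 1 - k" using arg_cong[OF wab, of "\<lambda>l. count_list l True"] cw k_def by simp
  have lb: "length b = 2 * (n - 1 - k)" using lw cw lak by simp
  have db: "is_dyck (n - 1 - k) b" unfolding is_dyck_def
  proof (intro conjI allI impI)
    show "length b = 2 * (n - 1 - k)" by fact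
    show "count_list b True = n - 1 - k" by fact
    fix l assume l: "l \<le> length b"
    have "j + l = Suc (length a + Suc l)" using la jS by simp
    then have "take (j + l) w = (True # a @ [False]) @ take l b" using wab by simp
    moreover have "j + l \<le> length w" using lw l la i_def j2 by simp
    ultimately show "count_list (take l b) False \<le> count_list (take l b) True"
      using dyck_pref[OF w, of "j + l"] caeq by simp
  qed
  show ?thesis using kn da db wab by blast
qed



definition combP :: "nat list \<Rightarrow> nat list \<Rightarrow> nat list" where
  "combP s t = map (\<lambda>x. x + length t) s @ (length s + length t + 1) # t"

lemma perm_length: "is_perm n p \<Longrightarrow> length p = n"
  unfolding is_perm_def by (metis card_atLeastAtMost diff_Suc_1 distinct_card)

lemma c132_app1: "contains_132 xs \<Longrightarrow> contains_132 (xs @ zs)"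
proof -
  assume "contains_132 xs"
  then obtain i j k where h: "i < j" "j < k" "k < length xs" "xs ! i < xs ! k" "xs ! k < xs ! j"
    unfolding contains_132_def by blast
  have "(xs @ zs) ! i = xs ! i" "(xs @ zs) ! j = xs ! j" "(xs @ zs) ! k = xs ! k"
    using h by (simp_all add: nth_append)
  then show ?thesis unfolding contains_132_def using h
    by (intro exI[of _ i] exI[of _ j] exI[of _ k]) simp
qed

lemma c132_app2: "contains_132 ys \<Longrightarrow> contains_132 (zs @ ys)"
proof -
  assume "contains_132 ys"
  then obtain i j k where h: "i < j" "j < k" "k < length ys" "ys ! i < ys ! k" "ys ! k < ys ! j"
    unfolding contains_132_def by blast
  let ?l = "length zs"
  have "(zs @ ys) ! (?l + i) = ys ! i" "(zs @ ys) ! (?l + j) = ys ! j" "(zs @ ys) ! (?l + k) = ys ! k"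
    by (simp_all add: nth_append)
  then show ?thesis unfolding contains_132_def using h
    by (intro exI[of _ "?l + i"] exI[of _ "?l + j"] exI[of _ "?l + k"]) simp
qed

lemma c132_sub: "\<forall>x\<in>set xs. c \<le> x \<Longrightarrow> contains_132 (map (\<lambda>x. x - c) xs) \<Longrightarrow> contains_132 xs"
proof -
  assume c: "\<forall>x\<in>set xs. c \<le> x" and "contains_132 (map (\<lambda>x. x - c) xs)"
  then obtain i j k where h: "i < j" "j < k" "k < length xs" "xs ! i - c < xs ! k - c" "xs ! k - c < xs ! j - c"
    unfolding contains_132_def by auto
  have "c \<le> xs ! i" "c \<le> xs ! j" "c \<le> xs ! k" using c h nth_mem by (meson less_trans)+
  then have "xs ! i < xs ! k" "xs ! k < xs ! j" using h by linarith+
  then show ?thesis unfolding contains_132_def using h by blast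
qed

lemma combP_Av: assumes s: "s \<in> Av132 k" and t: "t \<in> Av132 m"
  shows "combP s t \<in> Av132 (k + 1 + m)"
proof -
  have ps: "distinct s" "set s = {1..k}" and nc_s: "\<not> contains_132 s" using s by (auto simp: Av132_def is_perm_def)
  have pt: "distinct t" "set t = {1..m}" and nc_t: "\<not> contains_132 t" using t by (auto simp: Av132_def is_perm_def)
  have ls: "length s = k" using s perm_length by (auto simp: Av132_def)
  have lt: "length t = m" using t perm_length by (auto simp: Av132_def)
  let ?q = "combP s t"
  have setm: "set (map (\<lambda>x. x + m) s) = {m+1..m+k}"
  proof -
    have "(\<lambda>x. x + m) ` {1..k} = {m+1..m+k}"
    proof (rule set_eqI, rule iffI)
      fix y assume "y \<in> {m+1..m+k}"
      then show "y \<in> (\<lambda>x. x + m) ` {1..k}" by (intro image_eqI[where x="y - m"]) auto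
    qed auto
    then show ?thesis using ps by simp
  qed
  have dist: "distinct ?q" unfolding combP_def using ps pt ls lt setm
    by (auto simp: distinct_map inj_on_def)
  have setq: "set ?q = {1..k + 1 + m}" unfolding combP_def using ps pt ls lt setm by auto
  have nc: "\<not> contains_132 ?q"
  proof
    assume "contains_132 ?q"
    then obtain i j kk where h: "i < j" "j < kk" "kk < length ?q" "?q ! i < ?q ! kk" "?q ! kk < ?q ! j"
      unfolding contains_132_def by blast
    have q1: "x < k \<Longrightarrow> ?q ! x = s ! x + m" for x using ls lt by (simp add: combP_def nth_append)
    have q2: "?q ! k = k + 1 + m" using ls lt by (simp add: combP_def nth_append)
    have q3: "x > k \<Longrightarrow> ?q ! x = t ! (x - k - 1)" for x using ls lt
      by (simp add: combP_def nth_append)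
    have lq: "length ?q = k + 1 + m" using ls lt by (simp add: combP_def)
    have sr: "x < k \<Longrightarrow> 1 \<le> s ! x \<and> s ! x \<le> k" for x using ps ls nth_mem by fastforce
    have tr: "x < m \<Longrightarrow> 1 \<le> t ! x \<and> t ! x \<le> m" for x using pt lt nth_mem by fastforce
    have allle: "x < length ?q \<Longrightarrow> ?q ! x \<le> k + 1 + m" for x
      using setq nth_mem by fastforce
    consider "kk < k" | "kk = k" | "kk > k" by linarith
    then show False
    proof cases
      case 1
      then have "s ! i < s ! kk" "s ! kk < s ! j" using h q1 by auto
      then have "contains_132 s" unfolding contains_132_def using h 1 ls by blast
      then show False using nc_s by simp
    next
      case 2
      then show False using h q2 allle[of j] by simp
    next
      case 3
      have tk: "?q ! kk \<le> m" using q3[OF 3] tr[of "kk - k - 1"] h lq 3 by simp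
      consider "i < k" | "i = k" | "i > k" by linarith
      then show False
      proof cases
        case 1 then show False using q1[OF 1] sr[OF 1] tk h by simp
      next
        case 2 then show False using q2 tk h by simp
      next
        case i3: 3
        have "t ! (i - k - 1) < t ! (kk - k - 1)" "t ! (kk - k - 1) < t ! (j - k - 1)"
          using h q3 i3 by auto
        moreover have "i - k - 1 < j - k - 1" "j - k - 1 < kk - k - 1" "kk - k - 1 < length t"
          using h i3 lq lt by auto
        ultimately have "contains_132 t" unfolding contains_132_def by blast
        then show False using nc_t by simp
      qed
    qed
  qed
  show ?thesis unfolding Av132_def is_perm_def using dist setq nc by simp
qed



lemma Av_facts: "p \<in> Av132 n \<Longrightarrow> distinct p \<and> set p = {1..n} \<and> length p = n \<and> \<not> contains_132 p"
  using perm_length by (auto simp: Av132_def is_perm_def)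

lemma combP_inj: assumes s: "s \<in> Av132 k" and t: "t \<in> Av132 m" and s': "s' \<in> Av132 k'" and t': "t' \<in> Av132 m'"
  and nn: "k + 1 + m = k' + 1 + m'" and e: "combP s t = combP s' t'"
  shows "k = k' \<and> s = s' \<and> t = t'"
proof -
  have ls: "length s = k" "length t = m" "length s' = k'" "length t' = m'" using s t s' t' Av_facts by auto
  have kk: "k = k'"
  proof (rule ccontr)
    assume "k \<noteq> k'"
    then consider "k < k'" | "k' < k" by linarith
    then show False
    proof cases
      case 1
      have "combP s t ! k = k + 1 + m" using ls by (simp add: combP_def nth_append)
      moreover have "combP s' t' ! k = s' ! k + m'" using ls 1 by (simp add: combP_def nth_append)
      moreover have "s' ! k \<le> k'"
      proof -
        have "s' ! k \<in> set s'" using 1 ls by simp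
        then show ?thesis using Av_facts[OF s'] by auto
      qed
      ultimately show False using e nn by simp
    next
      case 2
      have "combP s' t' ! k' = k' + 1 + m'" using ls by (simp add: combP_def nth_append)
      moreover have "combP s t ! k' = s ! k' + m" using ls 2 by (simp add: combP_def nth_append)
      moreover have "s ! k' \<le> k"
      proof -
        have "s ! k' \<in> set s" using 2 ls by simp
        then show ?thesis using Av_facts[OF s] by auto
      qed
      ultimately show False using e nn by simp
    qed
  qed
  then have mm: "m = m'" using nn by simp
  have "map (\<lambda>x. x + m) s = map (\<lambda>x. x + m) s' \<and> t = t'"
    using e ls kk mm unfolding combP_def by simp
  moreover have "inj (\<lambda>x::nat. x + m)" by (simp add: inj_on_def)
  ultimately show ?thesis using kk by (simp add: inj_map_eq_map)
qed

lemma combP_asc: assumes s: "s \<in> Av132 k" and t: "t \<in> Av132 m"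
  shows "asc (combP s t) = inc_last (asc s) @ asc t"
proof -
  have ls: "length s = k" "length t = m" "set s = {1..k}" "set t = {1..m}" using s t Av_facts by auto
  have "asc (combP s t) = inc_last (asc (map (\<lambda>x. x + m) s)) @ asc t"
    unfolding combP_def ls(1,2)
  proof (rule asc_comb)
    show "\<forall>x\<in>set (map (\<lambda>x. x + m) s). x < k + m + 1" using ls(3) by auto
    show "\<forall>y\<in>set t. y < k + m + 1" using ls(4) by auto
  qed
  then show ?thesis by (simp add: asc_shift)
qed

lemma combP_surj: assumes p: "p \<in> Av132 n" and n: "n \<ge> 1"
  shows "\<exists>k<n. \<exists>s\<in>Av132 k. \<exists>t\<in>Av132 (n - 1 - k). p = combP s t"
proof -
  have pf: "distinct p" "set p = {1..n}" "length p = n" "\<not> contains_132 p" using Av_facts[OF p] by auto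
  have "n \<in> set p" using pf n by simp
  then obtain xs ys where pxy: "p = xs @ n # ys" by (meson split_list)
  define k where "k = length xs"
  define m where "m = length ys"
  have nkm: "n = k + 1 + m" using pf pxy k_def m_def by simp
  have dxy: "distinct xs" "distinct ys" "n \<notin> set xs" "n \<notin> set ys" "set xs \<inter> set ys = {}" using pf pxy by auto
  have sxy: "set xs \<union> set ys = {1..n} - {n}" using pf pxy dxy by auto
  have gt: "y < x" if x: "x \<in> set xs" and y: "y \<in> set ys" for x y
  proof (rule ccontr)
    assume "\<not> y < x"
    moreover have "x \<noteq> y" using dxy(5) x y by blast
    ultimately have xy: "x < y" by simp
    obtain i where i: "i < length xs" "xs ! i = x" using x by (meson in_set_conv_nth)
    obtain l where l: "l < length ys" "ys ! l = y" using y by (meson in_set_conv_nth)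
    have "y \<in> {1..n} - {n}" using y sxy by blast
    then have yn: "y < n" by simp
    have p1: "p ! i = x" using pxy i by (simp add: nth_append)
    have p2: "p ! k = n" using pxy k_def by (simp add: nth_append)
    have p3: "p ! (k + 1 + l) = y" using pxy l k_def by (simp add: nth_append)
    have lp: "k + 1 + l < length p" using pxy l k_def by simp
    have ik: "i < k" using i k_def by simp
    have "contains_132 p" unfolding contains_132_def
      apply (rule exI[of _ i], rule exI[of _ k], rule exI[of _ "k + 1 + l"])
      using p1 p2 p3 lp ik xy yn by simp
    then show False using pf by simp
  qed
  have down: "{1..y} \<subseteq> set ys" if y: "y \<in> set ys" for y
  proof
    fix z assume z: "z \<in> {1..y}"
    have "y \<in> {1..n} - {n}" using y sxy by blast
    then have "y < n" by simp
    then have "z \<in> {1..n} - {n}" using z by simp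
    then have "z \<in> set xs \<union> set ys" using sxy by blast
    moreover have "z \<notin> set xs"
    proof
      assume "z \<in> set xs"
      then have "y < z" using gt[OF _ y] by blast
      then show False using z by simp
    qed
    ultimately show "z \<in> set ys" by blast
  qed
  have sys: "set ys = {1..m}"
  proof (cases "ys = []")
    case True then show ?thesis using m_def by simp
  next
    case False
    define M where "M = Max (set ys)"
    have Min: "M \<in> set ys" using False M_def by simp
    have "set ys \<subseteq> {1..M}"
    proof
      fix y assume y: "y \<in> set ys"
      then have "y \<in> {1..n} - {n}" using sxy by blast
      moreover have "y \<le> M" using y M_def by simp
      ultimately show "y \<in> {1..M}" by simp
    qed
    moreover have "{1..M} \<subseteq> set ys" using down[OF Min] .
    ultimately have e: "set ys = {1..M}" by blast
    then have "M = m" using distinct_card[OF dxy(2)] m_def by simp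
    then show ?thesis using e by simp
  qed
  have sxs: "set xs = {m+1..n-1}"
  proof (rule set_eqI, rule iffI)
    fix x assume x: "x \<in> set xs"
    then have "x \<in> {1..n} - {n}" "x \<notin> set ys" using sxy dxy by blast+
    then show "x \<in> {m+1..n-1}" using sys by auto
  next
    fix x assume x: "x \<in> {m+1..n-1}"
    have "x \<in> {1..n} - {n}" using x by auto
    moreover have "x \<notin> {1..m}" using x by auto
    ultimately have "x \<in> {1..n} - {n}" "x \<notin> set ys" using sys by simp_all
    then show "x \<in> set xs" using sxy by blast
  qed
  define s where "s = map (\<lambda>x. x - m) xs"
  have "map (\<lambda>x. x - m + m) xs = xs" by (rule map_idI) (use sxs in auto)
  then have xs_s: "xs = map (\<lambda>x. x + m) s" unfolding s_def by (simp add: comp_def)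
  have ss: "set s = {1..k}"
  proof (rule set_eqI, rule iffI)
    fix y assume "y \<in> set s"
    then obtain x where x: "x \<in> set xs" "y = x - m" unfolding s_def by auto
    then have "x \<in> {m+1..n-1}" using sxs by blast
    then show "y \<in> {1..k}" using x nkm by auto
  next
    fix y assume y: "y \<in> {1..k}"
    then have "y + m \<in> {m+1..n-1}" using nkm by auto
    then have "y + m \<in> set xs" using sxs by blast
    then have "y + m - m \<in> set s" unfolding s_def set_map by (rule imageI)
    then show "y \<in> set s" by simp
  qed
  have "distinct (map (\<lambda>x. x + m) s)" using dxy(1) xs_s by metis
  then have ds: "distinct s" by (simp add: distinct_map)
  have ncs: "\<not> contains_132 s"
  proof
    assume c: "contains_132 s"
    have "\<forall>x\<in>set xs. m \<le> x" using sxs by auto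
    then have "contains_132 xs" using c132_sub[of xs m] c unfolding s_def by blast
    then have "contains_132 (xs @ (n # ys))" by (rule c132_app1)
    then show False using pf pxy by simp
  qed
  have nct: "\<not> contains_132 ys"
  proof
    assume "contains_132 ys"
    then have "contains_132 ((xs @ [n]) @ ys)" by (rule c132_app2)
    then show False using pf pxy by simp
  qed
  have sAv: "s \<in> Av132 k" using ds ss ncs unfolding Av132_def is_perm_def by blast
  have mk: "n - 1 - k = m" using nkm by simp
  have tAv: "ys \<in> Av132 (n - 1 - k)" using dxy(2) sys nct unfolding mk Av132_def is_perm_def by blast
  have ls: "length s = k" using s_def k_def by simp
  have "p = combP s ys" unfolding combP_def ls m_def[symmetric] using pxy xs_s nkm by simp
  moreover have "k < n" using nkm by simp
  ultimately show ?thesis using sAv tAv by blast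
qed



lemma bijP: assumes n: "n \<ge> 1"
  shows "bij_betw (\<lambda>(k, s, t). combP s t) (SIGMA k:{..<n}. Av132 k \<times> Av132 (n - 1 - k)) (Av132 n)"
  unfolding bij_betw_def
proof (intro conjI)
  show "inj_on (\<lambda>(k, s, t). combP s t) (SIGMA k:{..<n}. Av132 k \<times> Av132 (n - 1 - k))"
  proof (rule inj_onI, clarsimp)
    fix k s t k' s' t'
    assume h: "k < n" "s \<in> Av132 k" "t \<in> Av132 (n - Suc k)" "k' < n" "s' \<in> Av132 k'" "t' \<in> Av132 (n - Suc k')"
      "combP s t = combP s' t'"
    have "k + 1 + (n - Suc k) = k' + 1 + (n - Suc k')" using h by simp
    then show "k = k' \<and> s = s' \<and> t = t'" using combP_inj[OF h(2) h(3) h(5) h(6)] h(7) by blast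
  qed
  show "(\<lambda>(k, s, t). combP s t) ` (SIGMA k:{..<n}. Av132 k \<times> Av132 (n - 1 - k)) = Av132 n"
  proof
    show "(\<lambda>(k, s, t). combP s t) ` (SIGMA k:{..<n}. Av132 k \<times> Av132 (n - 1 - k)) \<subseteq> Av132 n"
    proof clarsimp
      fix k s t assume h: "k < n" "s \<in> Av132 k" "t \<in> Av132 (n - Suc k)"
      have "k + 1 + (n - Suc k) = n" using h by simp
      then show "combP s t \<in> Av132 n" using combP_Av[OF h(2) h(3)] by simp
    qed
    show "Av132 n \<subseteq> (\<lambda>(k, s, t). combP s t) ` (SIGMA k:{..<n}. Av132 k \<times> Av132 (n - 1 - k))"
    proof
      fix p assume "p \<in> Av132 n"
      then obtain k s t where "k < n" "s \<in> Av132 k" "t \<in> Av132 (n - 1 - k)" "p = combP s t"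
        using combP_surj n by blast
      then show "p \<in> (\<lambda>(k, s, t). combP s t) ` (SIGMA k:{..<n}. Av132 k \<times> Av132 (n - 1 - k))"
        by (intro image_eqI[of _ _ "(k, s, t)"]) auto
    qed
  qed
qed

lemma bijD: assumes n: "n \<ge> 1"
  shows "bij_betw (\<lambda>(k, a, b). True # a @ False # b) (SIGMA k:{..<n}. {w. is_dyck k w} \<times> {w. is_dyck (n - 1 - k) w}) {w. is_dyck n w}"
  unfolding bij_betw_def
proof (intro conjI)
  show "inj_on (\<lambda>(k, a, b). True # a @ False # b) (SIGMA k:{..<n}. {w. is_dyck k w} \<times> {w. is_dyck (n - 1 - k) w})"
  proof (rule inj_onI, clarsimp)
    fix k a b k' a' b'
    assume h: "k < n" "is_dyck k a" "is_dyck (n - Suc k) b" "k' < n" "is_dyck k' a'" "is_dyck (n - Suc k') b'"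
      "a @ False # b = a' @ False # b'"
    have "a = a' \<and> b = b'" using combD_inj[OF h(2) h(5)] h(7) by simp
    moreover have "k = k'" using dyck_cnt[OF h(2)] dyck_cnt[OF h(5)] calculation by simp
    ultimately show "k = k' \<and> a = a' \<and> b = b'" by simp
  qed
  show "(\<lambda>(k, a, b). True # a @ False # b) ` (SIGMA k:{..<n}. {w. is_dyck k w} \<times> {w. is_dyck (n - 1 - k) w}) = {w. is_dyck n w}"
  proof
    show "(\<lambda>(k, a, b). True # a @ False # b) ` (SIGMA k:{..<n}. {w. is_dyck k w} \<times> {w. is_dyck (n - 1 - k) w}) \<subseteq> {w. is_dyck n w}"
    proof clarsimp
      fix k a b assume h: "k < n" "is_dyck k a" "is_dyck (n - Suc k) b"
      have "k + 1 + (n - Suc k) = n" using h by simp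
      then show "is_dyck n (True # a @ False # b)" using combD_dyck[OF h(2) h(3)] by simp
    qed
    show "{w. is_dyck n w} \<subseteq> (\<lambda>(k, a, b). True # a @ False # b) ` (SIGMA k:{..<n}. {w. is_dyck k w} \<times> {w. is_dyck (n - 1 - k) w})"
    proof
      fix w assume "w \<in> {w. is_dyck n w}"
      then obtain k a b where "k < n" "is_dyck k a" "is_dyck (n - 1 - k) b" "w = True # a @ False # b"
        using dyck_split n by blast
      then show "w \<in> (\<lambda>(k, a, b). True # a @ False # b) ` (SIGMA k:{..<n}. {w. is_dyck k w} \<times> {w. is_dyck (n - 1 - k) w})"
        by (intro image_eqI[of _ _ "(k, a, b)"]) auto
    qed
  qed
qed

lemma Av0: "Av132 0 = {[]}"
  by (auto simp: Av132_def is_perm_def contains_132_def)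

lemma bij_ex: "\<exists>f. bij_betw f (Av132 n) {w. is_dyck n w} \<and> (\<forall>p\<in>Av132 n. delta (f p) = asc p)"
proof (induction n rule: less_induct)
  case (less n)
  show ?case
  proof (cases "n = 0")
    case True
    have "bij_betw (\<lambda>p. [] :: bool list) (Av132 n) {w. is_dyck n w}" using True by (simp add: Av0 dyck0 bij_betw_def)
    moreover have "\<forall>p\<in>Av132 n. delta ((\<lambda>p. [] :: bool list) p) = asc p" using True by (simp add: Av0 delta_def runs.simps)
    ultimately show ?thesis by blast
  next
    case False
    then have n: "n \<ge> 1" by simp
    have "\<forall>k. \<exists>f. k < n \<longrightarrow> bij_betw f (Av132 k) {w. is_dyck k w} \<and> (\<forall>p\<in>Av132 k. delta (f p) = asc p)"
      using less.IH by blast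
    then obtain F where F: "\<And>k. k < n \<Longrightarrow> bij_betw (F k) (Av132 k) {w. is_dyck k w} \<and> (\<forall>p\<in>Av132 k. delta (F k p) = asc p)"
      by metis
    define SP where "SP = (SIGMA k:{..<n}. Av132 k \<times> Av132 (n - 1 - k))"
    define SD where "SD = (SIGMA k:{..<n}. {w. is_dyck k w} \<times> {w. is_dyck (n - 1 - k) w})"
    define cP :: "nat \<times> nat list \<times> nat list \<Rightarrow> nat list" where "cP = (\<lambda>(k, s, t). combP s t)"
    define cD :: "nat \<times> bool list \<times> bool list \<Rightarrow> bool list" where "cD = (\<lambda>(k, a, b). True # a @ False # b)"
    define mid where "mid = (\<lambda>(k, s, t). (k, F k s, F (n - 1 - k) t))"
    have bP: "bij_betw cP SP (Av132 n)" unfolding cP_def SP_def by (rule bijP[OF n])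
    have bD: "bij_betw cD SD {w. is_dyck n w}" unfolding cD_def SD_def by (rule bijD[OF n])
    have bM: "bij_betw mid SP SD" unfolding bij_betw_def
    proof (intro conjI)
      show "inj_on mid SP"
      proof (rule inj_onI)
        fix x y assume x: "x \<in> SP" and y: "y \<in> SP" and e: "mid x = mid y"
        obtain k s t where xx: "x = (k, s, t)" by (cases x) auto
        obtain k' s' t' where yy: "y = (k', s', t')" by (cases y) auto
        have kk: "k = k'" using e xx yy by (simp add: mid_def)
        have h: "k < n" "s \<in> Av132 k" "t \<in> Av132 (n - 1 - k)" "s' \<in> Av132 k" "t' \<in> Av132 (n - 1 - k)"
          using x y xx yy kk by (auto simp: SP_def)
        have e2: "F k s = F k s'" "F (n - 1 - k) t = F (n - 1 - k) t'" using e xx yy kk by (auto simp: mid_def)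
        have "s = s'" using F[of k] h e2 by (auto simp: bij_betw_def inj_on_def)
        moreover have "t = t'" using F[of "n - 1 - k"] h e2 by (auto simp: bij_betw_def inj_on_def)
        ultimately show "x = y" using xx yy kk by simp
      qed
      show "mid ` SP = SD"
      proof
        show "mid ` SP \<subseteq> SD"
        proof
          fix z assume "z \<in> mid ` SP"
          then obtain k s t where h: "k < n" "s \<in> Av132 k" "t \<in> Av132 (n - 1 - k)" "z = mid (k, s, t)"
            by (auto simp: SP_def)
          have "F k s \<in> {w. is_dyck k w}" using F[of k] h by (auto simp: bij_betw_def)
          moreover have "F (n - 1 - k) t \<in> {w. is_dyck (n - 1 - k) w}" using F[of "n - 1 - k"] h by (auto simp: bij_betw_def)
          ultimately show "z \<in> SD" using h by (simp add: SD_def mid_def)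
        qed
        show "SD \<subseteq> mid ` SP"
        proof
          fix z assume "z \<in> SD"
          then obtain k a b where h: "k < n" "is_dyck k a" "is_dyck (n - 1 - k) b" "z = (k, a, b)"
            by (auto simp: SD_def)
          obtain s where s: "s \<in> Av132 k" "F k s = a" using F[of k] h
            by (auto simp: bij_betw_def) (metis imageE mem_Collect_eq)
          obtain t where t: "t \<in> Av132 (n - 1 - k)" "F (n - 1 - k) t = b" using F[of "n - 1 - k"] h
            by (auto simp: bij_betw_def) (metis imageE mem_Collect_eq)
          have "z = mid (k, s, t)" using h s t by (simp add: mid_def)
          moreover have "(k, s, t) \<in> SP" using h s t by (simp add: SP_def)
          ultimately show "z \<in> mid ` SP" by blast
        qed
      qed
    qed
    define f where "f = cD \<circ> mid \<circ> inv_into SP cP"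
    have bI: "bij_betw (inv_into SP cP) (Av132 n) SP" by (rule bij_betw_inv_into[OF bP])
    have bf: "bij_betw f (Av132 n) {w. is_dyck n w}"
      unfolding f_def using bij_betw_trans[OF bij_betw_trans[OF bI bM] bD] by (simp add: comp_assoc)
    have st: "delta (f p) = asc p" if p: "p \<in> Av132 n" for p
    proof -
      define x where "x = inv_into SP cP p"
      have xS: "x \<in> SP" using bI p x_def by (auto simp: bij_betw_def)
      have cx: "cP x = p" using bP p x_def by (simp add: bij_betw_inv_into_right)
      obtain k s t where xx: "x = (k, s, t)" by (cases x) auto
      have h: "k < n" "s \<in> Av132 k" "t \<in> Av132 (n - 1 - k)" using xS xx by (auto simp: SP_def)
      have Fs: "is_dyck k (F k s)" "delta (F k s) = asc s" using F[of k] h by (auto simp: bij_betw_def)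
      have Ft: "is_dyck (n - 1 - k) (F (n - 1 - k) t)" "delta (F (n - 1 - k) t) = asc t"
        using F[of "n - 1 - k"] h by (auto simp: bij_betw_def)
      have l1: "F k s = [] \<or> last (F k s) = False"
        using Fs(1) dyck_last[OF Fs(1)] dyck0 by (cases "k = 0") auto
      have l2: "F (n - 1 - k) t = [] \<or> hd (F (n - 1 - k) t) = True"
        using Ft(1) dyck_hd[OF Ft(1)] dyck0 by (cases "n - 1 - k = 0") auto
      have "f p = True # F k s @ False # F (n - 1 - k) t"
      proof -
        have "f p = cD (mid x)" by (simp add: f_def x_def)
        then show ?thesis unfolding xx by (simp add: cD_def mid_def)
      qed
      then have "delta (f p) = inc_last (asc s) @ asc t"
        using delta_comb[OF l1 l2] Fs Ft by simp
      also have "\<dots> = asc p" using cx xx combP_asc[OF h(2) h(3)] by (simp add: cP_def)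
      finally show ?thesis .
    qed
    show ?thesis using bf st by blast
  qed
qed

theorem lemma4p6:
  fixes n :: nat and S :: "nat set"
  assumes "n \<ge> 1" and "S \<subseteq> {1..n-1}"
  shows "card {p \<in> Av132 n. Des p = S} = card {w. is_dyck n w \<and> delta w = alpha n S}"
proof -
  obtain f where bf: "bij_betw f (Av132 n) {w. is_dyck n w}" and st: "\<forall>p\<in>Av132 n. delta (f p) = asc p"
    using bij_ex by blast
  have eq: "{p \<in> Av132 n. Des p = S} = {p \<in> Av132 n. delta (f p) = alpha n S}"
  proof (rule Collect_cong, rule conj_cong[OF refl])
    fix p assume p: "p \<in> Av132 n"
    have lp: "length p = n" using Av_facts[OF p] by simp
    have "p \<noteq> []" using lp assms(1) by auto
    then have "delta (f p) = alpha n (Des p)" using st p asc_alpha[of p] lp by simp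
    moreover have "Des p \<subseteq> {1..n-1}" using Des_sub[of p] lp by simp
    ultimately show "(Des p = S) = (delta (f p) = alpha n S)"
      using alpha_inj[of "Des p" n S] assms by auto
  qed
  have inj: "inj_on f {p \<in> Av132 n. delta (f p) = alpha n S}"
    using bf by (auto simp: bij_betw_def intro: inj_on_subset)
  have img: "f ` {p \<in> Av132 n. delta (f p) = alpha n S} = {w. is_dyck n w \<and> delta w = alpha n S}"
    using bf by (auto simp: bij_betw_def)
  show ?thesis unfolding eq using card_image[OF inj] img by simp
qed

end
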